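(* Let $X=(X_n)_{n\in\mathbb{Z}}$ be a stationary and ergodic sequence of integer-valued random variables, and let $\mathbb{Z}^R_X(0)$ be the connected component of $0$ in the record graph of $X$. Then $\mathbb{P}[\mathbb{Z}^R_X(0)\text{ is of class }\mathcal{I}/\mathcal{I}]\in\{0,1\}$ and $\mathbb{P}[\mathbb{Z}^R_X(0)\text{ is of class }\mathcal{I}/\mathcal{F}]\in\{0,1\}$.
   Context: For a sequence $x=(x_n)_{n\in\mathbb{Z}}$ write $y(j,k)=\sum_{l=j}^{k-1}x_l$ for $j<k$. The record map is $R_x(i)=\inf\{n>i: y(i,n)\ge0\}$ if this set is nonempty, and $R_x(i)=i$ otherwise. The record graph has vertex set $\mathbb{Z}$ and an edge $i\to R_x(i)$ whenever $R_x(i)\ne i$; components are in the undirected sense. For a component $C$, $u,v\in C$ lie in the same foil if $R_x^n(u)=R_x^n(v)$ for some $n\ge1$. $C$ is of class $\mathcal{I}/\mathcal{I}$ if it is infinite and all foils are infinite, and of class $\mathcal{I}/\mathcal{F}$ if it is infinite and all foils are finite. *)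

theory Defs
  imports "HOL-Probability.Probability"
begin

definition ysum :: "(int \<Rightarrow> int) \<Rightarrow> int \<Rightarrow> int \<Rightarrow> int" where
  "ysum x j k = (\<Sum>l\<in>{j..<k}. x l)"

definition record_map :: "(int \<Rightarrow> int) \<Rightarrow> int \<Rightarrow> int" where
  "record_map x i =
     (if \<exists>n>i. ysum x i n \<ge> 0 then (LEAST n. n > i \<and> ysum x i n \<ge> 0) else i)"

definition record_edges :: "(int \<Rightarrow> int) \<Rightarrow> (int \<times> int) set" where
  "record_edges x = {(i, record_map x i) | i. record_map x i \<noteq> i}"

definition record_component :: "(int \<Rightarrow> int) \<Rightarrow> int \<Rightarrow> int set" where
  "record_component x u = {v. (u, v) \<in> (record_edges x \<union> (record_edges x)\<inverse>)\<^sup>*}"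

definition foil :: "(int \<Rightarrow> int) \<Rightarrow> int set \<Rightarrow> int \<Rightarrow> int set" where
  "foil x C u = {v \<in> C. \<exists>n::nat. n \<ge> 1 \<and> (record_map x ^^ n) u = (record_map x ^^ n) v}"

definition class_II :: "(int \<Rightarrow> int) \<Rightarrow> int set \<Rightarrow> bool" where
  "class_II x C \<longleftrightarrow> infinite C \<and> (\<forall>u\<in>C. infinite (foil x C u))"

definition class_IF :: "(int \<Rightarrow> int) \<Rightarrow> int set \<Rightarrow> bool" where
  "class_IF x C \<longleftrightarrow> infinite C \<and> (\<forall>u\<in>C. finite (foil x C u))"

definition seq_space :: "(int \<Rightarrow> int) measure" where
  "seq_space = PiM UNIV (\<lambda>_::int. count_space (UNIV :: int set))"

definition shift :: "(int \<Rightarrow> int) \<Rightarrow> (int \<Rightarrow> int)" where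
  "shift x = (\<lambda>n. x (n + 1))"

definition stationary_seq :: "'a measure \<Rightarrow> (int \<Rightarrow> 'a \<Rightarrow> int) \<Rightarrow> bool" where
  "stationary_seq M X \<longleftrightarrow>
     distr M seq_space (\<lambda>\<omega> n. X (n + 1) \<omega>) = distr M seq_space (\<lambda>\<omega> n. X n \<omega>)"

definition ergodic_seq :: "'a measure \<Rightarrow> (int \<Rightarrow> 'a \<Rightarrow> int) \<Rightarrow> bool" where
  "ergodic_seq M X \<longleftrightarrow>
     (\<forall>A \<in> sets seq_space. shift -` A = A \<longrightarrow>
        measure M {\<omega> \<in> space M. (\<lambda>n. X n \<omega>) \<in> A} \<in> {0, 1})"

end

theory Submission
  imports Defs
begin

definition root :: "(int \<Rightarrow> int) \<Rightarrow> int \<Rightarrow> bool" where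
  "root x i \<longleftrightarrow> (\<forall>n>i. ysum x i n < 0)"

lemma ysum_split: "i \<le> j \<Longrightarrow> j \<le> k \<Longrightarrow> ysum x i k = ysum x i j + ysum x j k"
proof -
  assume "i \<le> j" "j \<le> k"
  then have "{i..<k} = {i..<j} \<union> {j..<k}" by auto
  then show ?thesis unfolding ysum_def by (simp add: sum.union_disjoint ivl_disj_int_two)
qed

lemma exists_min_int:
  fixes i n :: int
  assumes "P n" "n > i"
  shows "\<exists>m>i. P m \<and> (\<forall>k. i < k \<and> k < m \<longrightarrow> \<not> P k)"
  using assms
proof (induction "nat (n - i)" arbitrary: n rule: less_induct)
  case less
  show ?case
  proof (cases "\<exists>k. i < k \<and> k < n \<and> P k")
    case True
    then obtain k where "i < k" "k < n" "P k" by blast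
    then show ?thesis using less(1)[of k] by auto
  next
    case False
    then show ?thesis using less by blast
  qed
qed

lemma rm_root: "root x i \<Longrightarrow> record_map x i = i"
  unfolding root_def record_map_def by (auto simp: not_le)

lemma rm_nonroot:
  assumes "\<not> root x i"
  shows "record_map x i > i \<and> ysum x i (record_map x i) \<ge> 0 \<and>
         (\<forall>n. i < n \<and> n < record_map x i \<longrightarrow> ysum x i n < 0)"
proof -
  from assms obtain n where n: "n > i" "ysum x i n \<ge> 0" unfolding root_def by (auto simp: not_less)
  from exists_min_int[of "\<lambda>n. ysum x i n \<ge> 0", OF n(2) n(1)]
  obtain m where m: "m > i" "ysum x i m \<ge> 0" "\<forall>k. i < k \<and> k < m \<longrightarrow> \<not> ysum x i k \<ge> 0" by blast
  have "(LEAST n. n > i \<and> ysum x i n \<ge> 0) = m"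
    by (rule Least_equality) (use m in \<open>auto simp: not_less[symmetric]\<close>)
  then have "record_map x i = m" unfolding record_map_def using n by auto
  then show ?thesis using m by auto
qed

lemma rm_ge: "record_map x i \<ge> i"
  using rm_root rm_nonroot by (metis order.refl order_less_imp_le)

lemma rm_char:
  "record_map x i = c \<longleftrightarrow>
     (c > i \<and> ysum x i c \<ge> 0 \<and> (\<forall>n. i < n \<and> n < c \<longrightarrow> ysum x i n < 0)) \<or> (c = i \<and> root x i)"
proof
  assume "record_map x i = c"
  then show "(c > i \<and> ysum x i c \<ge> 0 \<and> (\<forall>n. i < n \<and> n < c \<longrightarrow> ysum x i n < 0)) \<or> (c = i \<and> root x i)"
    using rm_root rm_nonroot by (cases "root x i") auto
next
  assume H: "(c > i \<and> ysum x i c \<ge> 0 \<and> (\<forall>n. i < n \<and> n < c \<longrightarrow> ysum x i n < 0)) \<or> (c = i \<and> root x i)"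
  show "record_map x i = c"
  proof (cases "root x i")
    case True
    then show ?thesis using H rm_root unfolding root_def by force
  next
    case False
    note r = rm_nonroot[OF False]
    from False H have c: "c > i" "ysum x i c \<ge> 0" "\<forall>n. i < n \<and> n < c \<longrightarrow> ysum x i n < 0" by auto
    show ?thesis
    proof (rule ccontr)
      assume "record_map x i \<noteq> c"
      then consider "record_map x i < c" | "record_map x i > c" by linarith
      then show False
      proof cases
        case 1 then show False using c r by fastforce
      next
        case 2 then show False using c r by fastforce
      qed
    qed
  qed
qed


abbreviation RF where "RF x n u \<equiv> (record_map x ^^ n) u"

definition inC :: "(int \<Rightarrow> int) \<Rightarrow> int \<Rightarrow> int \<Rightarrow> bool" where
  "inC x u v \<longleftrightarrow> (\<exists>a b. RF x a u = RF x b v)"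

lemma RF_edges: "(u, RF x n u) \<in> (record_edges x \<union> (record_edges x)\<inverse>)\<^sup>*"
proof (induction n)
  case 0 then show ?case by simp
next
  case (Suc n)
  have "(RF x n u, RF x (Suc n) u) \<in> (record_edges x \<union> (record_edges x)\<inverse>)\<^sup>*"
  proof (cases "record_map x (RF x n u) = RF x n u")
    case True then show ?thesis by simp
  next
    case False
    then have "(RF x n u, RF x (Suc n) u) \<in> record_edges x" unfolding record_edges_def by auto
    then show ?thesis by blast
  qed
  with Suc show ?case by (meson rtrancl_trans)
qed

lemma RF_comm: "RF x a (RF x b u) = RF x (a + b) u"
  by (simp add: funpow_add)

lemma inC_trans: "inC x u v \<Longrightarrow> inC x v w \<Longrightarrow> inC x u w"
proof -
  assume "inC x u v" "inC x v w"
  then obtain a b c d where 1: "RF x a u = RF x b v" and 2: "RF x c v = RF x d w"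
    unfolding inC_def by blast
  have "RF x (c + a) u = RF x c (RF x a u)" by (simp add: RF_comm)
  also have "\<dots> = RF x c (RF x b v)" using 1 by simp
  also have "\<dots> = RF x b (RF x c v)" by (simp add: RF_comm add.commute)
  also have "\<dots> = RF x b (RF x d w)" using 2 by simp
  also have "\<dots> = RF x (b + d) w" by (simp add: RF_comm)
  finally show ?thesis unfolding inC_def by blast
qed

lemma inC_sym: "inC x u v \<Longrightarrow> inC x v u"
  unfolding inC_def by metis

lemma comp_char: "v \<in> record_component x u \<longleftrightarrow> inC x u v"
proof
  assume "v \<in> record_component x u"
  then have "(u, v) \<in> (record_edges x \<union> (record_edges x)\<inverse>)\<^sup>*" unfolding record_component_def by simp
  then show "inC x u v"
  proof (induction rule: rtrancl_induct)
    case base then show ?case unfolding inC_def by (metis funpow_0)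
  next
    case (step y z)
    have "inC x y z"
    proof (cases "(y, z) \<in> record_edges x")
      case True
      then have "z = RF x 1 y" unfolding record_edges_def by auto
      then show ?thesis unfolding inC_def by (metis funpow_0)
    next
      case False
      then have "(z, y) \<in> record_edges x" using step by auto
      then have "y = RF x 1 z" unfolding record_edges_def by auto
      then show ?thesis unfolding inC_def by (metis funpow_0)
    qed
    then show ?case using step inC_trans by blast
  qed
next
  assume "inC x u v"
  then obtain a b where ab: "RF x a u = RF x b v" unfolding inC_def by blast
  have 1: "(u, RF x a u) \<in> (record_edges x \<union> (record_edges x)\<inverse>)\<^sup>*" by (rule RF_edges)
  have "(v, RF x b v) \<in> (record_edges x \<union> (record_edges x)\<inverse>)\<^sup>*" by (rule RF_edges)
  then have "(RF x b v, v) \<in> ((record_edges x \<union> (record_edges x)\<inverse>)\<^sup>*)\<inverse>" by simp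
  also have "((record_edges x \<union> (record_edges x)\<inverse>)\<^sup>*)\<inverse> = (record_edges x \<union> (record_edges x)\<inverse>)\<^sup>*"
    by (simp add: rtrancl_converse[symmetric] converse_Un sup_commute)
  finally have "(u, v) \<in> (record_edges x \<union> (record_edges x)\<inverse>)\<^sup>*" using 1 ab by (metis rtrancl_trans)
  then show "v \<in> record_component x u" unfolding record_component_def by simp
qed

lemma foil_char: "v \<in> foil x (record_component x u) w \<longleftrightarrow> inC x u v \<and> (\<exists>n::nat. n \<ge> 1 \<and> RF x n w = RF x n v)"
  unfolding foil_def comp_char by simp


definition tau :: "int \<Rightarrow> (int \<Rightarrow> int) \<Rightarrow> (int \<Rightarrow> int)" where
  "tau k x = (\<lambda>n. x (n + k))"

lemma ysum_tau: "ysum (tau k x) i n = ysum x (i + k) (n + k)"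
  unfolding ysum_def tau_def
  by (rule sum.reindex_bij_witness[of _ "\<lambda>l. l - k" "\<lambda>l. l + k"]) auto

lemma root_tau: "root (tau k x) i \<longleftrightarrow> root x (i + k)"
  unfolding root_def ysum_tau
  by (metis (no_types, opaque_lifting) add_less_cancel_right diff_add_cancel)

lemma rm_tau: "record_map (tau k x) i = record_map x (i + k) - k"
proof -
  have "record_map x (i + k) = (record_map x (i + k) - k) + k" by simp
  then have "record_map (tau k x) i = record_map x (i + k) - k \<longleftrightarrow> record_map x (i+k) = (record_map x (i + k) - k) + k"
    unfolding rm_char ysum_tau root_tau
    by (smt (verit, best))
  then show ?thesis by simp
qed

lemma RF_tau: "RF (tau k x) n u = RF x n (u + k) - k"
  by (induction n) (auto simp: rm_tau)

lemma inC_tau: "inC (tau k x) u v \<longleftrightarrow> inC x (u + k) (v + k)"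
  unfolding inC_def RF_tau by simp

lemma infinite_shift: "infinite {v::int. P (v + k)} \<longleftrightarrow> infinite {v. P v}"
proof -
  have "{v::int. P (v + k)} = (\<lambda>v. v - k) ` {v. P v}"
    by (auto simp: image_iff intro!: exI[of _ "_ + k"])
  moreover have "inj (\<lambda>v::int. v - k)" by (simp add: inj_on_def)
  ultimately show ?thesis by (simp add: finite_image_iff inj_on_subset)
qed

lemma finite_shift: "finite {v::int. P (v + k)} \<longleftrightarrow> finite {v. P v}"
  using infinite_shift by blast

lemma comp_set: "record_component x u = {v. inC x u v}"
  using comp_char by blast

lemma foil_set: "foil x (record_component x u) w = {v. inC x u v \<and> (\<exists>n::nat. n \<ge> 1 \<and> RF x n w = RF x n v)}"
  using foil_char by blast

lemma II_char: "class_II x (record_component x u) \<longleftrightarrow>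
   infinite {v. inC x u v} \<and> (\<forall>w. inC x u w \<longrightarrow> infinite {v. inC x u v \<and> (\<exists>n::nat. n \<ge> 1 \<and> RF x n w = RF x n v)})"
  unfolding class_II_def foil_set by (simp add: comp_set)

lemma IF_char: "class_IF x (record_component x u) \<longleftrightarrow>
   infinite {v. inC x u v} \<and> (\<forall>w. inC x u w \<longrightarrow> finite {v. inC x u v \<and> (\<exists>n::nat. n \<ge> 1 \<and> RF x n w = RF x n v)})"
  unfolding class_IF_def foil_set by (simp add: comp_set)

lemma allshift: "(\<forall>w::int. P (w + k)) \<longleftrightarrow> (\<forall>w. P w)"
  by (metis diff_add_cancel)

lemma II_tau: "class_II (tau k x) (record_component (tau k x) 0) \<longleftrightarrow> class_II x (record_component x k)"
proof -
  have "class_II (tau k x) (record_component (tau k x) 0) \<longleftrightarrow>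
     infinite {v. inC x k (v + k)} \<and> (\<forall>w. inC x k (w + k) \<longrightarrow> infinite {v. inC x k (v + k) \<and> (\<exists>n::nat. n \<ge> 1 \<and> RF x n (w + k) = RF x n (v + k))})"
    unfolding II_char inC_tau RF_tau by simp
  also have "\<dots> \<longleftrightarrow> class_II x (record_component x k)"
    unfolding II_char infinite_shift[where P = "\<lambda>v. inC x k v \<and> (\<exists>n::nat. n \<ge> 1 \<and> RF x n _ = RF x n v)"]
      infinite_shift[where P = "\<lambda>v. inC x k v"]
    using allshift[where P = "\<lambda>w. inC x k w \<longrightarrow> infinite {v. inC x k v \<and> (\<exists>n::nat. n \<ge> 1 \<and> RF x n w = RF x n v)}"]
    by simp
  finally show ?thesis .
qed

lemma IF_tau: "class_IF (tau k x) (record_component (tau k x) 0) \<longleftrightarrow> class_IF x (record_component x k)"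
proof -
  have "class_IF (tau k x) (record_component (tau k x) 0) \<longleftrightarrow>
     infinite {v. inC x k (v + k)} \<and> (\<forall>w. inC x k (w + k) \<longrightarrow> finite {v. inC x k (v + k) \<and> (\<exists>n::nat. n \<ge> 1 \<and> RF x n (w + k) = RF x n (v + k))})"
    unfolding IF_char inC_tau RF_tau by simp
  also have "\<dots> \<longleftrightarrow> class_IF x (record_component x k)"
    unfolding IF_char finite_shift[where P = "\<lambda>v. inC x k v \<and> (\<exists>n::nat. n \<ge> 1 \<and> RF x n _ = RF x n v)"]
      infinite_shift[where P = "\<lambda>v. inC x k v"]
    using allshift[where P = "\<lambda>w. inC x k w \<longrightarrow> finite {v. inC x k v \<and> (\<exists>n::nat. n \<ge> 1 \<and> RF x n w = RF x n v)}"]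
    by simp
  finally show ?thesis .
qed


lemma rm_barrier: "root x r \<Longrightarrow> t \<le> r \<Longrightarrow> record_map x t \<le> r"
proof -
  assume r: "root x r" and t: "t \<le> r"
  show "record_map x t \<le> r"
  proof (cases "root x t")
    case True then show ?thesis using rm_root t by simp
  next
    case False
    note q = rm_nonroot[OF False]
    show ?thesis
    proof (rule ccontr)
      assume "\<not> record_map x t \<le> r"
      then have gt: "record_map x t > r" by simp
      have "t \<noteq> r" using r False by auto
      then have "ysum x t r < 0" using q gt t by auto
      moreover have "ysum x t (record_map x t) = ysum x t r + ysum x r (record_map x t)"
        using t gt by (intro ysum_split) auto
      moreover have "ysum x r (record_map x t) < 0" using r gt unfolding root_def by auto
      ultimately show False using q by linarith
    qed
  qed
qed

lemma RF_barrier: "root x r \<Longrightarrow> t \<le> r \<Longrightarrow> RF x b t \<le> r"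
  by (induction b) (auto intro: rm_barrier)

lemma RF_ge: "RF x b t \<ge> t"
  by (induction b) (auto intro: order_trans[OF _ rm_ge])

lemma RF_root: "root x r \<Longrightarrow> RF x b r = r"
  by (induction b) (auto simp: rm_root)

lemma hit:
  assumes nr: "\<not> root x i" and t: "i < t" "t \<le> record_map x i"
  shows "\<exists>a. RF x a t = record_map x i"
  using t
proof (induction "nat (record_map x i - t)" arbitrary: t rule: less_induct)
  case less
  let ?r = "record_map x i"
  note q = rm_nonroot[OF nr]
  show ?case
  proof (cases "t = ?r")
    case True then show ?thesis by (metis funpow_0)
  next
    case False
    then have tr: "t < ?r" using less by simp
    have "ysum x i t < 0" using q less tr by auto
    moreover have "ysum x i ?r = ysum x i t + ysum x t ?r" using less tr by (intro ysum_split) auto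
    ultimately have pos: "ysum x t ?r \<ge> 0" using q by linarith
    then have nt: "\<not> root x t" using tr unfolding root_def by auto
    note q2 = rm_nonroot[OF nt]
    have le: "record_map x t \<le> ?r" using q2 pos tr by (meson not_le)
    have "\<exists>a. RF x a (record_map x t) = ?r"
      using less(1)[of "record_map x t"] q2 le less(2) tr by auto
    then obtain a where "RF x a (record_map x t) = ?r" by blast
    then have "RF x (Suc a) t = ?r" by (simp add: funpow_Suc_right del: funpow.simps)
    then show ?thesis by blast
  qed
qed

definition badD :: "(int \<Rightarrow> int) \<Rightarrow> bool" where
  "badD x \<longleftrightarrow> root x 0 \<and> ((\<forall>n>0. \<not> root x n) \<or> (\<forall>n<0. \<not> root x n))"

lemma same_classes:
  assumes "\<not> badD x"
  shows "(class_II x (record_component x 0) \<longleftrightarrow> class_II x (record_component x 1))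
       \<and> (class_IF x (record_component x 0) \<longleftrightarrow> class_IF x (record_component x 1))"
proof (cases "root x 0")
  case True
  with assms obtain r r' where r: "r < 0" "root x r" and r': "r' > 0" "root x r'"
    unfolding badD_def by auto
  have "{v. inC x 0 v} \<subseteq> {r<..0}"
  proof
    fix v assume "v \<in> {v. inC x 0 v}"
    then obtain a b where "RF x a 0 = RF x b v" unfolding inC_def by blast
    then have e: "RF x b v = 0" using RF_root[OF True] by simp
    have "v \<le> 0" using RF_ge[where x=x and b=b and t=v] e by simp
    moreover have "v > r" using RF_barrier[OF r(2), of v b] e r(1) by (cases "v \<le> r") auto
    ultimately show "v \<in> {r<..0}" by simp
  qed
  then have f0: "finite {v. inC x 0 v}" using finite_subset by blast
  have "{v. inC x 1 v} \<subseteq> {1..r'}"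
  proof
    fix v assume "v \<in> {v. inC x 1 v}"
    then obtain a b where e: "RF x a 1 = RF x b v" unfolding inC_def by blast
    have A: "RF x a 1 \<ge> 1" using RF_ge[where x=x and b=a and t=1] by simp
    have B: "RF x a 1 \<le> r'" using RF_barrier[OF r'(2), of 1 a] r' by simp
    have "v > 0" using RF_barrier[OF True, of v b] A e by (cases "v \<le> 0") auto
    moreover have "v \<le> r'" using RF_ge[where x=x and b=b and t=v] B e by simp
    ultimately show "v \<in> {1..r'}" by simp
  qed
  then have f1: "finite {v. inC x 1 v}" using finite_subset by blast
  show ?thesis using f0 f1 unfolding II_char IF_char by simp
next
  case False
  note q = rm_nonroot[OF False]
  then have "\<exists>a. RF x a 1 = record_map x 0" using hit[OF False, of 1] by auto
  then obtain a where "RF x a 1 = RF x 1 0" by auto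
  then have "inC x 1 0" unfolding inC_def by blast
  then have "inC x 0 v \<longleftrightarrow> inC x 1 v" for v using inC_trans inC_sym by blast
  then have "record_component x 0 = record_component x 1" unfolding comp_set by auto
  then show ?thesis by simp
qed


lemma meas_coord[measurable]: "(\<lambda>x. x l) \<in> measurable seq_space (count_space UNIV)"
  unfolding seq_space_def by measurable

lemma meas_coord_real[measurable]: "(\<lambda>x. real_of_int (x l)) \<in> borel_measurable seq_space"
proof -
  have "(real_of_int) \<in> borel_measurable (count_space UNIV)" by (simp add: measurable_count_space_eq1)
  then show ?thesis using measurable_compose[OF meas_coord] by blast
qed

lemma meas_ysum[measurable]: "(\<lambda>x. real_of_int (ysum x i n)) \<in> borel_measurable seq_space"
  unfolding ysum_def of_int_sum by measurable

lemma pred_ysum_ge[measurable]: "(\<lambda>x. ysum x i n \<ge> 0) \<in> measurable seq_space (count_space UNIV)"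
proof -
  have "(\<lambda>x. real_of_int (ysum x i n) \<ge> 0) \<in> measurable seq_space (count_space UNIV)" by measurable
  then show ?thesis by simp
qed

lemma pred_ysum_lt[measurable]: "(\<lambda>x. ysum x i n < 0) \<in> measurable seq_space (count_space UNIV)"
proof -
  have "(\<lambda>x. real_of_int (ysum x i n) < 0) \<in> measurable seq_space (count_space UNIV)" by measurable
  then show ?thesis by simp
qed

lemma pred_root[measurable]: "(\<lambda>x. root x i) \<in> measurable seq_space (count_space UNIV)"
  unfolding root_def by measurable

lemma pred_rm[measurable]: "(\<lambda>x. record_map x i = c) \<in> measurable seq_space (count_space UNIV)"
  unfolding rm_char by measurable

lemma meas_rm[measurable]: "(\<lambda>x. record_map x i) \<in> measurable seq_space (count_space UNIV)"
  unfolding measurable_count_space_eq2_countable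
proof (intro conjI ballI)
  fix a :: int
  have "(\<lambda>x. record_map x i) -` {a} \<inter> space seq_space = {x \<in> space seq_space. record_map x i = a}" by auto
  also have "\<dots> \<in> sets seq_space" by measurable
  finally show "(\<lambda>x. record_map x i) -` {a} \<inter> space seq_space \<in> sets seq_space" .
qed auto

lemma meas_RF[measurable]: "(\<lambda>x. RF x n u) \<in> measurable seq_space (count_space UNIV)"
proof (induction n)
  case 0 then show ?case by simp
next
  case (Suc n)
  have "(\<lambda>x. record_map x (RF x n u)) \<in> measurable seq_space (count_space UNIV)"
    by (rule measurable_compose_countable[where f = "\<lambda>j x. record_map x j", OF meas_rm Suc])
  then show ?case by simp
qed

lemma pred_inC[measurable]: "(\<lambda>x. inC x u v) \<in> measurable seq_space (count_space UNIV)"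
  unfolding inC_def by measurable

lemma infinite_int_iff: "infinite (S::int set) \<longleftrightarrow> (\<forall>m::nat. \<exists>v. v \<in> S \<and> \<bar>v\<bar> > int m)"
proof
  assume "infinite S"
  show "\<forall>m::nat. \<exists>v. v \<in> S \<and> \<bar>v\<bar> > int m"
  proof
    fix m :: nat
    show "\<exists>v. v \<in> S \<and> \<bar>v\<bar> > int m"
    proof (rule ccontr)
      assume "\<not> ?thesis"
      then have "S \<subseteq> {- int m..int m}" by force
      then show False using \<open>infinite S\<close> finite_subset by blast
    qed
  qed
next
  assume H: "\<forall>m::nat. \<exists>v. v \<in> S \<and> \<bar>v\<bar> > int m"
  show "infinite S"
  proof
    assume "finite S"
    define m where "m = (\<Sum>v\<in>S. \<bar>v\<bar>)"
    have "\<forall>v\<in>S. \<bar>v\<bar> \<le> m" unfolding m_def using \<open>finite S\<close>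
      by (auto intro: member_le_sum)
    moreover obtain v where "v \<in> S" "int (nat m) < \<bar>v\<bar>" using H by blast
    ultimately have "\<bar>v\<bar> \<le> m" "int (nat m) < \<bar>v\<bar>" by auto
    then show False by linarith
  qed
qed

lemma finite_int_iff: "finite (S::int set) \<longleftrightarrow> \<not> (\<forall>m::nat. \<exists>v. v \<in> S \<and> \<bar>v\<bar> > int m)"
  using infinite_int_iff by blast

lemma pred_II[measurable]: "(\<lambda>x. class_II x (record_component x u)) \<in> measurable seq_space (count_space UNIV)"
  unfolding II_char infinite_int_iff mem_Collect_eq by measurable

lemma pred_IF[measurable]: "(\<lambda>x. class_IF x (record_component x u)) \<in> measurable seq_space (count_space UNIV)"
  unfolding IF_char finite_int_iff infinite_int_iff mem_Collect_eq by measurable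

lemma pred_badD[measurable]: "badD \<in> measurable seq_space (count_space UNIV)"
  unfolding badD_def by measurable

lemma meas_tau[measurable]: "tau k \<in> measurable seq_space seq_space"
  unfolding tau_def seq_space_def
  by (rule measurable_PiM_single') (auto simp: space_PiM)


lemma tau_tau: "tau a (tau b x) = tau (a + b) x"
  unfolding tau_def by (simp add: ac_simps)

lemma tau_0: "tau 0 x = x"
  unfolding tau_def by simp

lemma shift_tau: "shift x = tau 1 x"
  unfolding shift_def tau_def by simp

lemma disjoint_equal_measure_zero:
  assumes "prob_space M" and sets: "\<And>k::nat. A k \<in> sets M"
    and disj: "disjoint_family A" and eq: "\<And>k. measure M (A k) = c"
  shows "c = 0"
proof (rule ccontr)
  interpret prob_space M by fact
  assume "c \<noteq> 0"
  moreover have "c \<ge> 0" using eq[of 0] by (metis measure_nonneg)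
  ultimately have "c > 0" by simp
  then obtain n where n: "1 < real n * c" using ex_less_of_nat_mult by blast
  have "measure M (\<Union>k\<in>{..<n}. A k) = (\<Sum>k\<in>{..<n}. measure M (A k))"
    by (rule finite_measure_finite_Union) (use sets disj in \<open>auto simp: disjoint_family_on_def\<close>)
  also have "\<dots> = real n * c" using eq by simp
  finally have "measure M (\<Union>k\<in>{..<n}. A k) = real n * c" .
  moreover have "measure M (\<Union>k\<in>{..<n}. A k) \<le> 1" by (rule prob_le_1)
  ultimately show False using n by simp
qed

lemma zero_one:
  fixes M :: "'a measure" and X :: "int \<Rightarrow> 'a \<Rightarrow> int"
  assumes PS: "prob_space M"
    and Xm: "\<And>n. X n \<in> measurable M (count_space UNIV)"
    and st: "stationary_seq M X"
    and er: "ergodic_seq M X"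
    and Qm[measurable]: "Q \<in> measurable seq_space (count_space UNIV)"
    and Qs: "\<And>y. \<not> badD y \<Longrightarrow> Q (tau 1 y) = Q y"
  shows "{\<omega> \<in> space M. Q (\<lambda>n. X n \<omega>)} \<in> sets M \<and> measure M {\<omega> \<in> space M. Q (\<lambda>n. X n \<omega>)} \<in> {0, 1}"
proof -
  interpret prob_space M by fact
  define Xs where "Xs = (\<lambda>\<omega> n. X n \<omega>)"
  define Xs' where "Xs' = (\<lambda>\<omega> n. X (n + 1) \<omega>)"
  have Xsm[measurable]: "Xs \<in> measurable M seq_space"
    unfolding Xs_def seq_space_def by (rule measurable_PiM_single') (auto simp: space_PiM Xm)
  have Xsm'[measurable]: "Xs' \<in> measurable M seq_space"
    unfolding Xs'_def seq_space_def by (rule measurable_PiM_single') (auto simp: space_PiM Xm)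
  have st': "distr M seq_space Xs' = distr M seq_space Xs"
    using st unfolding stationary_seq_def Xs_def Xs'_def .
  have distr_k: "distr M seq_space (\<lambda>\<omega>. tau (int k) (Xs \<omega>)) = distr M seq_space Xs" for k :: nat
  proof (induction k)
    case 0 then show ?case by (simp add: tau_0)
  next
    case (Suc k)
    have e: "(\<lambda>\<omega>. tau (int (Suc k)) (Xs \<omega>)) = tau (int k) \<circ> Xs'"
      unfolding Xs_def Xs'_def tau_def by (auto simp: fun_eq_iff ac_simps)
    have "distr M seq_space (tau (int k) \<circ> Xs') = distr (distr M seq_space Xs') seq_space (tau (int k))"
      by (rule distr_distr[symmetric]) measurable
    also have "\<dots> = distr (distr M seq_space Xs) seq_space (tau (int k))" using st' by simp
    also have "\<dots> = distr M seq_space (tau (int k) \<circ> Xs)"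
      by (rule distr_distr) measurable
    also have "\<dots> = distr M seq_space Xs" using Suc by (simp add: comp_def)
    finally show ?case using e by simp
  qed
  have meas_k: "measure M {\<omega> \<in> space M. tau (int k) (Xs \<omega>) \<in> S} = measure M {\<omega> \<in> space M. Xs \<omega> \<in> S}"
    if S: "S \<in> sets seq_space" for S k
  proof -
    have "measure M {\<omega> \<in> space M. tau (int k) (Xs \<omega>) \<in> S} = measure (distr M seq_space (\<lambda>\<omega>. tau (int k) (Xs \<omega>))) S"
      using S by (subst measure_distr) (auto simp: vimage_def Int_def conj_commute)
    also have "\<dots> = measure (distr M seq_space Xs) S" using distr_k by simp
    also have "\<dots> = measure M {\<omega> \<in> space M. Xs \<omega> \<in> S}"
      using S by (subst measure_distr) (auto simp: vimage_def Int_def conj_commute)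
    finally show ?thesis .
  qed
  define Sp where "Sp = {x. root x 0 \<and> (\<forall>n>0. \<not> root x n)}"
  define Sm where "Sm = {x. root x 0 \<and> (\<forall>n<0. \<not> root x n)}"
  have Sp_sets[measurable]: "Sp \<in> sets seq_space"
  proof -
    have "Sp = {x \<in> space seq_space. root x 0 \<and> (\<forall>n>0. \<not> root x n)}"
      unfolding Sp_def seq_space_def by (auto simp: space_PiM)
    also have "\<dots> \<in> sets seq_space" by measurable
    finally show ?thesis .
  qed
  have Sm_sets[measurable]: "Sm \<in> sets seq_space"
  proof -
    have "Sm = {x \<in> space seq_space. root x 0 \<and> (\<forall>n<0. \<not> root x n)}"
      unfolding Sm_def seq_space_def by (auto simp: space_PiM)
    also have "\<dots> \<in> sets seq_space" by measurable
    finally show ?thesis .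
  qed
  have Sp0: "measure M {\<omega> \<in> space M. Xs \<omega> \<in> Sp} = 0"
  proof (rule disjoint_equal_measure_zero[OF PS])
    show "{\<omega> \<in> space M. tau (int k) (Xs \<omega>) \<in> Sp} \<in> sets M" for k by measurable
    show "measure M {\<omega> \<in> space M. tau (int k) (Xs \<omega>) \<in> Sp} = measure M {\<omega> \<in> space M. Xs \<omega> \<in> Sp}" for k
      by (rule meas_k) measurable
    show "disjoint_family (\<lambda>k::nat. {\<omega> \<in> space M. tau (int k) (Xs \<omega>) \<in> Sp})"
    proof (unfold disjoint_family_on_def, intro ballI impI)
      fix a b :: nat assume "a \<noteq> b"
      show "{\<omega> \<in> space M. tau (int a) (Xs \<omega>) \<in> Sp} \<inter> {\<omega> \<in> space M. tau (int b) (Xs \<omega>) \<in> Sp} = {}"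
      proof (cases "a < b")
        case True
        then show ?thesis unfolding Sp_def using root_tau
          by (auto) (metis add_0 of_nat_less_iff diff_add_cancel diff_gt_0_iff_gt)
      next
        case False
        then have "b < a" using \<open>a \<noteq> b\<close> by simp
        then show ?thesis unfolding Sp_def using root_tau
          by (auto) (metis add_0 of_nat_less_iff diff_add_cancel diff_gt_0_iff_gt)
      qed
    qed
  qed
  have Sm0: "measure M {\<omega> \<in> space M. Xs \<omega> \<in> Sm} = 0"
  proof (rule disjoint_equal_measure_zero[OF PS])
    show "{\<omega> \<in> space M. tau (int k) (Xs \<omega>) \<in> Sm} \<in> sets M" for k by measurable
    show "measure M {\<omega> \<in> space M. tau (int k) (Xs \<omega>) \<in> Sm} = measure M {\<omega> \<in> space M. Xs \<omega> \<in> Sm}" for k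
      by (rule meas_k) measurable
    show "disjoint_family (\<lambda>k::nat. {\<omega> \<in> space M. tau (int k) (Xs \<omega>) \<in> Sm})"
    proof (unfold disjoint_family_on_def, intro ballI impI)
      fix a b :: nat assume "a \<noteq> b"
      show "{\<omega> \<in> space M. tau (int a) (Xs \<omega>) \<in> Sm} \<inter> {\<omega> \<in> space M. tau (int b) (Xs \<omega>) \<in> Sm} = {}"
      proof (cases "a < b")
        case True
        then show ?thesis unfolding Sm_def using root_tau
          by (auto) (metis add_0 of_nat_less_iff diff_add_cancel diff_less_0_iff_less)
      next
        case False
        then have "b < a" using \<open>a \<noteq> b\<close> by simp
        then show ?thesis unfolding Sm_def using root_tau
          by (auto) (metis add_0 of_nat_less_iff diff_add_cancel diff_less_0_iff_less)
      qed
    qed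
  qed
  have bad_eq: "badD x \<longleftrightarrow> x \<in> Sp \<union> Sm" for x unfolding badD_def Sp_def Sm_def by auto
  have AEk: "AE \<omega> in M. \<not> badD (tau (int k) (Xs \<omega>))" for k
  proof -
    have "measure M {\<omega> \<in> space M. tau (int k) (Xs \<omega>) \<in> Sp \<union> Sm} = measure M {\<omega> \<in> space M. Xs \<omega> \<in> Sp \<union> Sm}"
      by (rule meas_k) measurable
    also have "\<dots> \<le> measure M {\<omega> \<in> space M. Xs \<omega> \<in> Sp} + measure M {\<omega> \<in> space M. Xs \<omega> \<in> Sm}"
    proof -
      have "{\<omega> \<in> space M. Xs \<omega> \<in> Sp \<union> Sm} = {\<omega> \<in> space M. Xs \<omega> \<in> Sp} \<union> {\<omega> \<in> space M. Xs \<omega> \<in> Sm}" by auto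
      then show ?thesis by (simp add: measure_Un_le)
    qed
    finally have z: "measure M {\<omega> \<in> space M. tau (int k) (Xs \<omega>) \<in> Sp \<union> Sm} = 0"
      using Sp0 Sm0 by (simp add: measure_le_0_iff)
    show ?thesis
    proof (subst AE_iff_measurable[where N = "{\<omega> \<in> space M. tau (int k) (Xs \<omega>) \<in> Sp \<union> Sm}"])
      show "{\<omega> \<in> space M. tau (int k) (Xs \<omega>) \<in> Sp \<union> Sm} \<in> sets M" by measurable
      show "{\<omega> \<in> space M. \<not> \<not> badD (tau (int k) (Xs \<omega>))} = {\<omega> \<in> space M. tau (int k) (Xs \<omega>) \<in> Sp \<union> Sm}"
        using bad_eq by auto
      show "emeasure M {\<omega> \<in> space M. tau (int k) (Xs \<omega>) \<in> Sp \<union> Sm} = 0"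
        using z by (simp add: emeasure_eq_measure)
    qed
  qed
  then have AEall: "AE \<omega> in M. \<forall>k::nat. \<not> badD (tau (int k) (Xs \<omega>))"
    by (simp add: AE_all_countable)
  have Qk: "Q (tau (int k) y) = Q y" if "\<forall>k::nat. \<not> badD (tau (int k) y)" for y k
  proof (induction k)
    case 0 then show ?case by (simp add: tau_0)
  next
    case (Suc k)
    have "Q (tau (int (Suc k)) y) = Q (tau 1 (tau (int k) y))" by (simp add: tau_tau add.commute)
    also have "\<dots> = Q (tau (int k) y)" using Qs that by blast
    finally show ?case using Suc by simp
  qed
  define A' where "A' = {x. \<exists>m::nat. \<forall>k\<ge>m. Q (tau (int k) x)}"
  have A'_sets: "A' \<in> sets seq_space"
  proof -
    have [measurable]: "(\<lambda>x. Q (tau (int k) x)) \<in> measurable seq_space (count_space UNIV)" for k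
      by (rule measurable_compose[OF meas_tau Qm])
    have "A' = {x \<in> space seq_space. \<exists>m::nat. \<forall>k\<ge>m. Q (tau (int k) x)}"
      unfolding A'_def seq_space_def by (auto simp: space_PiM)
    also have "\<dots> \<in> sets seq_space" by measurable
    finally show ?thesis .
  qed
  have A'_inv: "shift -` A' = A'"
  proof
    show "shift -` A' \<subseteq> A'"
    proof
      fix x assume "x \<in> shift -` A'"
      then obtain m :: nat where m: "\<forall>k\<ge>m. Q (tau (int k) (tau 1 x))" unfolding A'_def shift_tau by auto
      have "\<forall>k\<ge>Suc m. Q (tau (int k) x)"
      proof (intro allI impI)
        fix k assume "Suc m \<le> k"
        then have "m \<le> k - 1" by simp
        then have "Q (tau (int (k - 1)) (tau 1 x))" using m by blast
        moreover have "tau (int (k - 1)) (tau 1 x) = tau (int k) x" using \<open>Suc m \<le> k\<close> by (simp add: tau_tau of_nat_diff)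
        ultimately show "Q (tau (int k) x)" by simp
      qed
      then show "x \<in> A'" unfolding A'_def by blast
    qed
  next
    show "A' \<subseteq> shift -` A'"
    proof
      fix x assume "x \<in> A'"
      then obtain m :: nat where m: "\<forall>k\<ge>m. Q (tau (int k) x)" unfolding A'_def by auto
      have "\<forall>k\<ge>m. Q (tau (int k) (tau 1 x))"
      proof (intro allI impI)
        fix k assume "m \<le> k"
        then have "m \<le> Suc k" by simp
        then have "Q (tau (int (Suc k)) x)" using m by blast
        moreover have "tau (int k) (tau 1 x) = tau (int (Suc k)) x" by (simp add: tau_tau add.commute)
        ultimately show "Q (tau (int k) (tau 1 x))" by simp
      qed
      then show "x \<in> shift -` A'" unfolding A'_def shift_tau by auto
    qed
  qed
  have erg: "measure M {\<omega> \<in> space M. Xs \<omega> \<in> A'} \<in> {0, 1}"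
    using er A'_sets A'_inv unfolding ergodic_seq_def Xs_def by blast
  have AEeq: "AE \<omega> in M. \<omega> \<in> {\<omega> \<in> space M. Q (Xs \<omega>)} \<longleftrightarrow> \<omega> \<in> {\<omega> \<in> space M. Xs \<omega> \<in> A'}"
    using AEall
  proof (rule AE_mp, intro AE_I2 impI)
    fix \<omega> assume "\<omega> \<in> space M" "\<forall>k::nat. \<not> badD (tau (int k) (Xs \<omega>))"
    then have "\<And>k. Q (tau (int k) (Xs \<omega>)) = Q (Xs \<omega>)" using Qk by blast
    then show "\<omega> \<in> {\<omega> \<in> space M. Q (Xs \<omega>)} \<longleftrightarrow> \<omega> \<in> {\<omega> \<in> space M. Xs \<omega> \<in> A'}"
      using \<open>\<omega> \<in> space M\<close> unfolding A'_def by auto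
  qed
  have s1: "{\<omega> \<in> space M. Q (Xs \<omega>)} \<in> sets M" by measurable
  have s2: "{\<omega> \<in> space M. Xs \<omega> \<in> A'} \<in> sets M" using A'_sets by measurable
  have "measure M {\<omega> \<in> space M. Q (Xs \<omega>)} = measure M {\<omega> \<in> space M. Xs \<omega> \<in> A'}"
    by (rule finite_measure_eq_AE[OF AEeq s1 s2])
  with erg s1 show ?thesis unfolding Xs_def by simp
qed


theorem proposition3p1:
  fixes M :: "'a measure" and X :: "int \<Rightarrow> 'a \<Rightarrow> int"
  assumes "prob_space M"
    and "\<And>n. X n \<in> measurable M (count_space UNIV)"
    and "stationary_seq M X"
    and "ergodic_seq M X"
  shows "{\<omega> \<in> space M. class_II (\<lambda>n. X n \<omega>) (record_component (\<lambda>n. X n \<omega>) 0)} \<in> sets M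
       \<and> measure M {\<omega> \<in> space M. class_II (\<lambda>n. X n \<omega>) (record_component (\<lambda>n. X n \<omega>) 0)} \<in> {0, 1}
       \<and> {\<omega> \<in> space M. class_IF (\<lambda>n. X n \<omega>) (record_component (\<lambda>n. X n \<omega>) 0)} \<in> sets M
       \<and> measure M {\<omega> \<in> space M. class_IF (\<lambda>n. X n \<omega>) (record_component (\<lambda>n. X n \<omega>) 0)} \<in> {0, 1}"
proof -
  have 1: "{\<omega> \<in> space M. class_II (\<lambda>n. X n \<omega>) (record_component (\<lambda>n. X n \<omega>) 0)} \<in> sets M
       \<and> measure M {\<omega> \<in> space M. class_II (\<lambda>n. X n \<omega>) (record_component (\<lambda>n. X n \<omega>) 0)} \<in> {0, 1}"
    by (rule zero_one[OF assms, where Q = "\<lambda>y. class_II y (record_component y 0)"])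
       (measurable, use same_classes II_tau in auto)
  have 2: "{\<omega> \<in> space M. class_IF (\<lambda>n. X n \<omega>) (record_component (\<lambda>n. X n \<omega>) 0)} \<in> sets M
       \<and> measure M {\<omega> \<in> space M. class_IF (\<lambda>n. X n \<omega>) (record_component (\<lambda>n. X n \<omega>) 0)} \<in> {0, 1}"
    by (rule zero_one[OF assms, where Q = "\<lambda>y. class_IF y (record_component y 0)"])
       (measurable, use same_classes IF_tau in auto)
  from 1 2 show ?thesis by blast
qed

end
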